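(* Let $G$ be a simple graph with canonical mixed graph $F$ and let $Y$ be as defined in the context. Let $u,w\in V(G)$ and $v\in Y$ be such that $\overrightarrow{uv}$ and $\overrightarrow{vw}$ are arcs of $F$ and $uw\notin E(G)$. Then $cM_2(G-uv-vw+uw)>cM_2(G)$.
   Context: All graphs are finite and simple; $d_G(u)$ is the degree of $u$ and $cM_2(G)=\sum_{uv\in E(G)}|d_G(u)^2-d_G(v)^2|$. $G-uv-vw+uw$ denotes $G$ with edges $uv,vw$ deleted and edge $uw$ added. The canonical mixed graph $F$ of $G$ has vertex set $V(G)$; for each edge $uv\in E(G)$: if $d_G(u)>d_G(v)$ then $F$ contains the arc $\overrightarrow{uv}$, and if $d_G(u)=d_G(v)$ then $F$ contains the undirected edge $uv$. $d^+_F(u)$ (resp. $d^-_F(u)$) is the number of arcs of $F$ with tail (resp. head) $u$. $Y=\{u\in V(G): d^+_F(u)< d^-_F(u)\}$. *)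

theory Defs
  imports Main
begin

definition simple_graph :: "'a set \<Rightarrow> 'a set set \<Rightarrow> bool" where
  "simple_graph V E \<longleftrightarrow> finite V \<and> (\<forall>e\<in>E. \<exists>x y. x \<in> V \<and> y \<in> V \<and> x \<noteq> y \<and> e = {x, y})"

definition deg :: "'a set set \<Rightarrow> 'a \<Rightarrow> nat" where
  "deg E u = card {v. {u, v} \<in> E}"

text \<open>cM_2(G) = sum over edges uv of |d(u)^2 - d(v)^2|; for an edge e = {u,v} this is
  the maximum minus the minimum of the squared degrees of its endpoints.\<close>
definition cM2 :: "'a set set \<Rightarrow> int" where
  "cM2 E = (\<Sum>e\<in>E. Max ((\<lambda>x. int (deg E x) ^ 2) ` e) - Min ((\<lambda>x. int (deg E x) ^ 2) ` e))"

definition arc :: "'a set set \<Rightarrow> 'a \<Rightarrow> 'a \<Rightarrow> bool" where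
  "arc E u v \<longleftrightarrow> {u, v} \<in> E \<and> deg E u > deg E v"

definition outdeg :: "'a set set \<Rightarrow> 'a \<Rightarrow> nat" where
  "outdeg E u = card {v. arc E u v}"

definition indeg :: "'a set set \<Rightarrow> 'a \<Rightarrow> nat" where
  "indeg E u = card {v. arc E v u}"

definition Yset :: "'a set \<Rightarrow> 'a set set \<Rightarrow> 'a set" where
  "Yset V E = {u \<in> V. outdeg E u < indeg E u}"

definition move_edges :: "'a set set \<Rightarrow> 'a \<Rightarrow> 'a \<Rightarrow> 'a \<Rightarrow> 'a set set" where
  "move_edges E u v w = (E - {{u, v}, {v, w}}) \<union> {{u, w}}"

end

theory Submission
  imports Defs
begin

lemma w_pair: "Max ((\<lambda>x. f x) ` {a, b}) - Min ((\<lambda>x. f x) ` {a, b}) = \<bar>(f a :: int) - f b\<bar>"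
  by (simp add: max_def min_def)

lemma delta_bound:
  fixes d x :: int
  assumes "d \<ge> 2" "x \<ge> 0"
  shows "\<bar>(d-2)^2 - x^2\<bar> - \<bar>d^2 - x^2\<bar> \<ge> (4*d-4) * (of_bool (x > d) - of_bool (x < d))"
proof -
  consider "x > d" | "x < d" | "x = d" by linarith
  then show ?thesis
  proof cases
    case 1
    have "x^2 > d^2" using 1 assms by (simp add: power_strict_mono)
    moreover have "d^2 \<ge> (d-2)^2" using assms by (simp add: power_mono)
    ultimately have "\<bar>(d-2)^2 - x^2\<bar> = x^2 - (d-2)^2" "\<bar>d^2 - x^2\<bar> = x^2 - d^2" by auto
    then show ?thesis using 1 by (simp add: power2_eq_square algebra_simps)
  next
    case 2
    have "x^2 \<le> d^2" using 2 assms by (simp add: power_mono)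
    then have "\<bar>d^2 - x^2\<bar> = d^2 - x^2" by auto
    moreover have "\<bar>(d-2)^2 - x^2\<bar> \<ge> (d-2)^2 - x^2" by simp
    ultimately show ?thesis using 2 by (simp add: power2_eq_square algebra_simps)
  next
    case 3 then show ?thesis by simp
  qed
qed

theorem mainTheorem4:
  fixes V :: "'a set" and E :: "'a set set" and u v w :: 'a
  assumes "simple_graph V E"
    and "u \<in> V" and "w \<in> V" and "v \<in> Yset V E"
    and "arc E u v" and "arc E v w"
    and "{u, w} \<notin> E"
  shows "cM2 (move_edges E u v w) > cM2 E"
proof -
  define E' where "E' = move_edges E u v w"
  define D where "D = deg E"
  define D' where "D' = deg E'"
  define N where "N x = {y. {x, y} \<in> E}" for x
  have finV: "finite V" and edg: "\<And>e. e \<in> E \<Longrightarrow> \<exists>x y. x \<in> V \<and> y \<in> V \<and> x \<noteq> y \<and> e = {x, y}"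
    using assms(1) unfolding simple_graph_def by auto
  have finE: "finite E"
  proof -
    have "E \<subseteq> Pow V"
    proof
      fix e assume "e \<in> E"
      then obtain x y where "x \<in> V" "y \<in> V" "e = {x, y}" using edg[of e] by blast
      then show "e \<in> Pow V" by simp
    qed
    then show ?thesis by (rule finite_subset) (simp add: finV)
  qed
  have NV: "N x \<subseteq> V" for x
  proof
    fix y assume "y \<in> N x"
    then have "{x, y} \<in> E" by (simp add: N_def)
    then obtain a b where "a \<in> V" "b \<in> V" "{x, y} = {a, b}" using edg[of "{x, y}"] by blast
    then show "y \<in> V" by (auto simp: doubleton_eq_iff)
  qed
  have finN: "finite (N x)" for x by (rule finite_subset[OF NV finV])
  have noloop: "{x, x} \<notin> E" for x
  proof
    assume "{x, x} \<in> E"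
    then obtain a b where "a \<noteq> b" "{x, x} = {a, b}" using edg[of "{x, x}"] by blast
    then show False by (auto simp: doubleton_eq_iff)
  qed
  have uv: "{u, v} \<in> E" "D u > D v" using assms(5) unfolding arc_def D_def by auto
  have vw: "{v, w} \<in> E" "D v > D w" using assms(6) unfolding arc_def D_def by auto
  have neq: "u \<noteq> v" "v \<noteq> w" "u \<noteq> w" using uv vw by auto
  have DN: "D x = card (N x)" for x unfolding D_def deg_def N_def by simp
  have D'N: "D' x = card {y. {x, y} \<in> E'}" for x unfolding D'_def deg_def by simp
  have E'mem: "e \<in> E' \<longleftrightarrow> (e \<in> E \<and> e \<noteq> {u, v} \<and> e \<noteq> {v, w}) \<or> e = {u, w}" for e
    unfolding E'_def move_edges_def by auto
  have uN: "v \<in> N u" "w \<notin> N u" using uv assms(7) unfolding N_def by auto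
  have wN: "v \<in> N w" "u \<notin> N w" using vw assms(7) unfolding N_def by (auto simp: insert_commute)
  have vN: "u \<in> N v" "w \<in> N v" using uv vw unfolding N_def by (auto simp: insert_commute)
  have D'u: "D' u = D u"
  proof -
    have "{y. {u, y} \<in> E'} = insert w (N u - {v})"
      using neq unfolding E'mem N_def by (auto simp: doubleton_eq_iff)
    moreover have "card (N u) > 0" using uN finN[of u] card_gt_0_iff by blast
    ultimately show ?thesis using uN neq finN by (simp add: D'N DN card_Diff_singleton)
  qed
  have D'w: "D' w = D w"
  proof -
    have "{y. {w, y} \<in> E'} = insert u (N w - {v})"
      using neq unfolding E'mem N_def by (auto simp: doubleton_eq_iff)
    moreover have "card (N w) > 0" using wN finN[of w] card_gt_0_iff by blast
    ultimately show ?thesis using wN neq finN by (simp add: D'N DN card_Diff_singleton)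
  qed
  have D'o: "D' x = D x" if "x \<notin> {u, v, w}" for x
  proof -
    have "{y. {x, y} \<in> E'} = N x"
      using neq that unfolding E'mem N_def by (auto simp: doubleton_eq_iff)
    then show ?thesis by (simp add: D'N DN)
  qed
  have D'x: "D' x = D x" if "x \<noteq> v" for x
    using that D'u D'w D'o by (cases "x = u"; cases "x = w") auto
  have D'v: "D' v = D v - 2"
  proof -
    have "{y. {v, y} \<in> E'} = N v - {u, w}"
      using neq unfolding E'mem N_def by (auto simp: doubleton_eq_iff)
    moreover have "card (N v - {u, w}) = card (N v) - 2"
      using vN neq finN by (simp add: card_Diff_subset)
    ultimately show ?thesis by (simp add: D'N DN)
  qed
  have Dv2: "D v \<ge> 2"
  proof -
    have "{u, w} \<subseteq> N v" using vN by auto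
    then have "card {u, w} \<le> card (N v)" using finN card_mono by blast
    then show ?thesis using neq DN by simp
  qed
  define g where "g (F::'a set set) x = int (deg F x) ^ 2" for F x
  define wt where "wt (F::'a set set) e = Max (g F ` e) - Min (g F ` e)" for F e
  have cM2w: "cM2 F = sum (wt F) F" for F unfolding cM2_def wt_def g_def by simp
  have wtp: "wt F {a, b} = \<bar>g F a - g F b\<bar>" for F a b
    unfolding wt_def using w_pair[of "g F" a b] by simp
  have gE: "g E = (\<lambda>x. int (D x) ^ 2)" unfolding g_def D_def by auto
  have gE': "g E' = (\<lambda>x. int (D' x) ^ 2)" unfolding g_def D'_def by auto
  define C where "C = {e \<in> E. v \<notin> e}"
  define S where "S = N v - {u, w}"
  define B where "B = (\<lambda>x. {v, x}) ` S"
  have BE: "B \<subseteq> E" unfolding B_def S_def N_def by auto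
  have Esplit: "E = C \<union> B \<union> {{u, v}, {v, w}}"
  proof
    show "E \<subseteq> C \<union> B \<union> {{u, v}, {v, w}}"
    proof
      fix e assume e: "e \<in> E"
      show "e \<in> C \<union> B \<union> {{u, v}, {v, w}}"
      proof (cases "v \<in> e")
        case False then show ?thesis using e C_def by auto
      next
        case True
        obtain a b where ab: "e = {a, b}" using edg[OF e] by blast
        then obtain x where x: "e = {v, x}" using True by (auto simp: insert_commute)
        then have "x \<in> N v" using e N_def by auto
        then show ?thesis using x unfolding B_def S_def by (auto simp: insert_commute)
      qed
    qed
    show "C \<union> B \<union> {{u, v}, {v, w}} \<subseteq> E" using BE uv vw C_def by auto
  qed
  have E'split: "E' = C \<union> B \<union> {{u, w}}"
  proof -
    have "E - {{u, v}, {v, w}} = C \<union> B"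
    proof -
      have "C \<inter> {{u, v}, {v, w}} = {}" unfolding C_def by auto
      moreover have "B \<inter> {{u, v}, {v, w}} = {}"
      proof -
        have "{v, x} \<notin> {{u, v}, {v, w}}" if "x \<in> S" for x
        proof -
          have "x \<noteq> u" "x \<noteq> w" using that S_def by auto
          then show ?thesis using neq by (auto simp: doubleton_eq_iff)
        qed
        then show ?thesis unfolding B_def by blast
      qed
      moreover have "E - {{u, v}, {v, w}} = (C \<union> B \<union> {{u, v}, {v, w}}) - {{u, v}, {v, w}}"
        using Esplit by simp
      ultimately show ?thesis by (simp add: Un_Diff Diff_triv)
    qed
    then show ?thesis unfolding E'_def move_edges_def by simp
  qed
  have finC: "finite C" using finE C_def by simp
  have finS: "finite S" using finN S_def by simp
  have finB: "finite B" using finS B_def by simp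
  have CB: "C \<inter> B = {}" unfolding C_def B_def by auto
  have uwCB: "{u, w} \<notin> C \<union> B" using assms(7) BE C_def by auto
  have uvCB: "{u, v} \<notin> C \<union> B" "{v, w} \<notin> C \<union> B"
  proof -
    have "{v, x} \<notin> {{u, v}, {v, w}}" if "x \<in> S" for x
    proof -
      have "x \<noteq> u" "x \<noteq> w" using that S_def by auto
      then show ?thesis using neq by (auto simp: doubleton_eq_iff)
    qed
    then have "{u, v} \<notin> B" "{v, w} \<notin> B" unfolding B_def by blast+
    moreover have "{u, v} \<notin> C" "{v, w} \<notin> C" unfolding C_def by auto
    ultimately show "{u, v} \<notin> C \<union> B" "{v, w} \<notin> C \<union> B" by auto
  qed
  have sumE: "cM2 E = sum (wt E) C + sum (wt E) B + wt E {u, v} + wt E {v, w}"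
  proof -
    have "cM2 E = sum (wt E) (C \<union> B \<union> {{u, v}, {v, w}})" using cM2w Esplit by metis
    also have "\<dots> = sum (wt E) (insert {u, v} (insert {v, w} (C \<union> B)))"
      by (simp add: insert_commute)
    also have "\<dots> = sum (wt E) (C \<union> B) + wt E {u, v} + wt E {v, w}"
      using uvCB finC finB neq by (simp add: doubleton_eq_iff)
    also have "sum (wt E) (C \<union> B) = sum (wt E) C + sum (wt E) B"
      using CB finC finB by (simp add: sum.union_disjoint)
    finally show ?thesis .
  qed
  have sumE': "cM2 E' = sum (wt E') C + sum (wt E') B + wt E' {u, w}"
  proof -
    have "cM2 E' = sum (wt E') (insert {u, w} (C \<union> B))" using cM2w E'split by simp
    also have "\<dots> = sum (wt E') (C \<union> B) + wt E' {u, w}"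
      using uwCB finC finB by simp
    also have "sum (wt E') (C \<union> B) = sum (wt E') C + sum (wt E') B"
      using CB finC finB by (simp add: sum.union_disjoint)
    finally show ?thesis .
  qed
  have sC: "sum (wt E') C = sum (wt E) C"
  proof (rule sum.cong)
    fix e assume "e \<in> C"
    then have "v \<notin> e" using C_def by auto
    then have "g E' ` e = g E ` e" unfolding gE gE' by (intro image_cong refl) (metis D'x)
    then show "wt E' e = wt E e" unfolding wt_def by simp
  qed simp
  have sUW: "wt E' {u, w} = wt E {u, v} + wt E {v, w}"
  proof -
    have "D w < D u" using uv vw by simp
    then have "(int (D w))^2 \<le> (int (D u))^2" "(int (D w))^2 \<le> (int (D v))^2" "(int (D v))^2 \<le> (int (D u))^2"
      using uv vw by (simp_all add: power_mono)
    then show ?thesis unfolding wtp gE gE' using D'u D'w by simp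
  qed
  define d where "d = int (D v)"
  define I where "I = {x \<in> N v. D x > D v}"
  define Ot where "Ot = {x \<in> N v. D x < D v}"
  have vnotN: "v \<notin> N v" using noloop N_def by auto
  have sB: "sum (wt E') B - sum (wt E) B = (\<Sum>x\<in>S. \<bar>(d-2)^2 - (int (D x))^2\<bar> - \<bar>d^2 - (int (D x))^2\<bar>)"
  proof -
    have inj: "inj_on (\<lambda>x. {v, x}) S" by (auto simp: inj_on_def doubleton_eq_iff)
    have "sum (wt E') B - sum (wt E) B = (\<Sum>x\<in>S. wt E' {v, x} - wt E {v, x})"
      unfolding B_def using inj by (simp add: sum.reindex sum_subtractf)
    also have "\<dots> = (\<Sum>x\<in>S. \<bar>(d-2)^2 - (int (D x))^2\<bar> - \<bar>d^2 - (int (D x))^2\<bar>)"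
    proof (rule sum.cong)
      fix x assume "x \<in> S"
      then have "x \<noteq> v" using vnotN S_def by auto
      then show "wt E' {v, x} - wt E {v, x} = \<bar>(d-2)^2 - (int (D x))^2\<bar> - \<bar>d^2 - (int (D x))^2\<bar>"
        unfolding wtp gE gE' d_def using D'x D'v Dv2 by (simp add: of_nat_diff)
    qed simp
    finally show ?thesis .
  qed
  have lower: "(\<Sum>x\<in>S. \<bar>(d-2)^2 - (int (D x))^2\<bar> - \<bar>d^2 - (int (D x))^2\<bar>)
      \<ge> (\<Sum>x\<in>S. (4*d-4) * (of_bool (x \<in> I) - of_bool (x \<in> Ot)))"
  proof (rule sum_mono)
    fix x assume "x \<in> S"
    then have xN: "x \<in> N v" using S_def by auto
    have "(4*d-4) * (of_bool (int (D x) > d) - of_bool (int (D x) < d))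
        \<le> \<bar>(d-2)^2 - (int (D x))^2\<bar> - \<bar>d^2 - (int (D x))^2\<bar>"
      using delta_bound[of d "int (D x)"] Dv2 d_def by simp
    moreover have "of_bool (int (D x) > d) = (of_bool (x \<in> I) :: int)"
      "of_bool (int (D x) < d) = (of_bool (x \<in> Ot) :: int)"
      using xN unfolding I_def Ot_def d_def by auto
    ultimately show "(4*d-4) * (of_bool (x \<in> I) - of_bool (x \<in> Ot))
        \<le> \<bar>(d-2)^2 - (int (D x))^2\<bar> - \<bar>d^2 - (int (D x))^2\<bar>" by simp
  qed
  have cnt: "(\<Sum>x\<in>S. (4*d-4) * (of_bool (x \<in> I) - of_bool (x \<in> Ot)))
      = (4*d-4) * (int (card (S \<inter> I)) - int (card (S \<inter> Ot)))"
  proof -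
    have "(\<Sum>x\<in>S. (4*d-4) * (of_bool (x \<in> I) - of_bool (x \<in> Ot)))
       = (4*d-4) * ((\<Sum>x\<in>S. of_bool (x \<in> I)) - (\<Sum>x\<in>S. of_bool (x \<in> Ot)))"
      by (simp only: sum_subtractf[symmetric] sum_distrib_left)
    also have "\<dots> = (4*d-4) * (int (card (S \<inter> I)) - int (card (S \<inter> Ot)))"
      using finS by (simp add: sum_of_bool_eq)
    finally show ?thesis .
  qed
  have Y: "outdeg E v < indeg E v" using assms(4) unfolding Yset_def by auto
  have outO: "outdeg E v = card Ot"
  proof -
    have "{y. arc E v y} = Ot" unfolding arc_def Ot_def N_def D_def by auto
    then show ?thesis unfolding outdeg_def by simp
  qed
  have inI: "indeg E v = card I"
  proof -
    have "{y. arc E y v} = I" unfolding arc_def I_def N_def D_def by (auto simp: insert_commute)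
    then show ?thesis unfolding indeg_def by simp
  qed
  have finI: "finite I" "finite Ot" using finN I_def Ot_def by auto
  have uI: "u \<in> I" "w \<notin> I" using vN uv vw I_def by auto
  have wO: "w \<in> Ot" "u \<notin> Ot" using vN uv vw Ot_def by auto
  have SI: "S \<inter> I = I - {u}" using uI unfolding S_def I_def by auto
  have SO: "S \<inter> Ot = Ot - {w}" using wO unfolding S_def Ot_def by auto
  have cards: "int (card (S \<inter> I)) - int (card (S \<inter> Ot)) \<ge> 1"
  proof -
    have "card (S \<inter> I) = card I - 1" "card (S \<inter> Ot) = card Ot - 1"
      using SI SO uI wO finI by (simp_all add: card_Diff_singleton)
    moreover have "card I \<ge> 1" using uI finI card_gt_0_iff[of I] by fastforce
    moreover have "card Ot \<ge> 1" using wO finI card_gt_0_iff[of Ot] by fastforce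
    ultimately show ?thesis using Y outO inI by simp
  qed
  have dpos: "4*d-4 > 0" using Dv2 d_def by simp
  have "(4*d-4) * (int (card (S \<inter> I)) - int (card (S \<inter> Ot))) > 0"
    using cards dpos by simp
  then have "sum (wt E') B - sum (wt E) B > 0" using sB lower cnt by linarith
  then show ?thesis using sumE sumE' sC sUW E'_def by simp
qed

end
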